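(* Let $B$ be a ring and $S\subseteq S_0(B)$ a multiplicative subset of $B$ such that $S^{-1}B$ exists. If every left regular element of $S^{-1}B$ is regular, then every left regular element of $B$ is regular. The right-side version also holds: if $BS^{-1}$ exists and every right regular element of $BS^{-1}$ is regular, then every right regular element of $B$ is regular.
   Context: Rings are associative with identity. $S_0(B)$ is the set of regular elements (non-zero-divisors on both sides) of $B$. An element $x$ of a ring is left regular if $rx=0$ implies $r=0$, and right regular if $xr=0$ implies $r=0$. A multiplicative subset $S$ satisfies $1\in S$, $0\notin S$, and is closed under products. $S^{-1}B$ (respectively $BS^{-1}$) denotes the left (respectively right) ring of fractions of $B$ with respect to $S$. For $S$ consisting of regular elements, $S^{-1}B$ exists iff the left Ore condition holds: for all $a\in B$, $s\in S$ there are $s'\in S$, $a'\in B$ with $s'a=a's$. The right case is symmetric. *)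

theory Defs
  imports "HOL-Algebra.Ring" "HOL-Algebra.RingHom"
begin

definition left_regular :: "('a, 'm) ring_scheme \<Rightarrow> 'a \<Rightarrow> bool" where
  "left_regular R x \<longleftrightarrow> x \<in> carrier R \<and>
     (\<forall>r \<in> carrier R. r \<otimes>\<^bsub>R\<^esub> x = \<zero>\<^bsub>R\<^esub> \<longrightarrow> r = \<zero>\<^bsub>R\<^esub>)"

definition right_regular :: "('a, 'm) ring_scheme \<Rightarrow> 'a \<Rightarrow> bool" where
  "right_regular R x \<longleftrightarrow> x \<in> carrier R \<and>
     (\<forall>r \<in> carrier R. x \<otimes>\<^bsub>R\<^esub> r = \<zero>\<^bsub>R\<^esub> \<longrightarrow> r = \<zero>\<^bsub>R\<^esub>)"

definition regular :: "('a, 'm) ring_scheme \<Rightarrow> 'a \<Rightarrow> bool" where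
  "regular R x \<longleftrightarrow> left_regular R x \<and> right_regular R x"

definition mult_subset :: "('a, 'm) ring_scheme \<Rightarrow> 'a set \<Rightarrow> bool" where
  "mult_subset R S \<longleftrightarrow> S \<subseteq> carrier R \<and> \<one>\<^bsub>R\<^esub> \<in> S \<and> \<zero>\<^bsub>R\<^esub> \<notin> S \<and>
     (\<forall>s \<in> S. \<forall>t \<in> S. s \<otimes>\<^bsub>R\<^esub> t \<in> S)"

definition left_ring_of_fractions ::
  "('a, 'm) ring_scheme \<Rightarrow> 'a set \<Rightarrow> ('b, 'n) ring_scheme \<Rightarrow> ('a \<Rightarrow> 'b) \<Rightarrow> bool" where
  "left_ring_of_fractions B S Q \<phi> \<longleftrightarrow> ring Q \<and> \<phi> \<in> ring_hom B Q \<and>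
     (\<forall>s \<in> S. \<phi> s \<in> Units Q) \<and>
     (\<forall>q \<in> carrier Q. \<exists>s \<in> S. \<exists>b \<in> carrier B. q = inv\<^bsub>Q\<^esub> (\<phi> s) \<otimes>\<^bsub>Q\<^esub> \<phi> b) \<and>
     (\<forall>b \<in> carrier B. \<phi> b = \<zero>\<^bsub>Q\<^esub> \<longleftrightarrow> (\<exists>s \<in> S. s \<otimes>\<^bsub>B\<^esub> b = \<zero>\<^bsub>B\<^esub>))"

definition right_ring_of_fractions ::
  "('a, 'm) ring_scheme \<Rightarrow> 'a set \<Rightarrow> ('b, 'n) ring_scheme \<Rightarrow> ('a \<Rightarrow> 'b) \<Rightarrow> bool" where
  "right_ring_of_fractions B S Q \<phi> \<longleftrightarrow> ring Q \<and> \<phi> \<in> ring_hom B Q \<and>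
     (\<forall>s \<in> S. \<phi> s \<in> Units Q) \<and>
     (\<forall>q \<in> carrier Q. \<exists>s \<in> S. \<exists>b \<in> carrier B. q = \<phi> b \<otimes>\<^bsub>Q\<^esub> inv\<^bsub>Q\<^esub> (\<phi> s)) \<and>
     (\<forall>b \<in> carrier B. \<phi> b = \<zero>\<^bsub>Q\<^esub> \<longleftrightarrow> (\<exists>s \<in> S. b \<otimes>\<^bsub>B\<^esub> s = \<zero>\<^bsub>B\<^esub>))"

end

theory Submission
  imports Defs
begin

theorem proposition4p5:
  fixes B :: "('a, 'm) ring_scheme" and S :: "'a set"
    and Q :: "('b, 'n) ring_scheme" and \<phi> :: "'a \<Rightarrow> 'b"
  assumes "ring B"
    and "mult_subset B S"
    and "S \<subseteq> {x. regular B x}"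
  shows "(left_ring_of_fractions B S Q \<phi> \<and> (\<forall>x. left_regular Q x \<longrightarrow> regular Q x)
            \<longrightarrow> (\<forall>x. left_regular B x \<longrightarrow> regular B x))
       \<and> (right_ring_of_fractions B S Q \<phi> \<and> (\<forall>x. right_regular Q x \<longrightarrow> regular Q x)
            \<longrightarrow> (\<forall>x. right_regular B x \<longrightarrow> regular B x))"
proof (intro conjI impI allI)
  interpret B: ring B by fact
  have Sc: "S \<subseteq> carrier B" using assms(2) unfolding mult_subset_def by blast
  fix x
  assume H: "left_ring_of_fractions B S Q \<phi> \<and> (\<forall>x. left_regular Q x \<longrightarrow> regular Q x)"
    and lx: "left_regular B x"
  then have rQ: "ring Q" and hom: "\<phi> \<in> ring_hom B Q" and U: "\<forall>s \<in> S. \<phi> s \<in> Units Q"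
    and rep: "\<forall>q \<in> carrier Q. \<exists>s \<in> S. \<exists>b \<in> carrier B. q = inv\<^bsub>Q\<^esub> (\<phi> s) \<otimes>\<^bsub>Q\<^esub> \<phi> b"
    and ker: "\<forall>b \<in> carrier B. \<phi> b = \<zero>\<^bsub>Q\<^esub> \<longleftrightarrow> (\<exists>s \<in> S. s \<otimes>\<^bsub>B\<^esub> b = \<zero>\<^bsub>B\<^esub>)"
    and QH: "\<forall>x. left_regular Q x \<longrightarrow> regular Q x"
    unfolding left_ring_of_fractions_def by auto
  interpret Q: ring Q by fact
  have xc: "x \<in> carrier B" using lx unfolding left_regular_def by auto
  have inj: "b = \<zero>\<^bsub>B\<^esub>" if bh: "b \<in> carrier B" "\<phi> b = \<zero>\<^bsub>Q\<^esub>" for b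
  proof -
    obtain s where s: "s \<in> S" "s \<otimes>\<^bsub>B\<^esub> b = \<zero>\<^bsub>B\<^esub>" using ker bh by blast
    then have "regular B s" using assms(3) by auto
    then show ?thesis using s bh unfolding regular_def right_regular_def by auto
  qed
  have phic: "\<phi> b \<in> carrier Q" if "b \<in> carrier B" for b
    using hom that by (simp add: ring_hom_closed)
  have phim: "\<phi> (a \<otimes>\<^bsub>B\<^esub> b) = \<phi> a \<otimes>\<^bsub>Q\<^esub> \<phi> b" if "a \<in> carrier B" "b \<in> carrier B" for a b
    using hom that by (simp add: ring_hom_mult)
  have phi0: "\<phi> \<zero>\<^bsub>B\<^esub> = \<zero>\<^bsub>Q\<^esub>"
    using ring_hom_zero[OF hom assms(1) rQ] .
  have "left_regular Q (\<phi> x)"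
    unfolding left_regular_def
  proof (intro conjI ballI impI)
    show "\<phi> x \<in> carrier Q" using phic xc .
    fix q assume q: "q \<in> carrier Q" "q \<otimes>\<^bsub>Q\<^esub> \<phi> x = \<zero>\<^bsub>Q\<^esub>"
    obtain s b where sb: "s \<in> S" "b \<in> carrier B" "q = inv\<^bsub>Q\<^esub> (\<phi> s) \<otimes>\<^bsub>Q\<^esub> \<phi> b"
      using rep q by auto
    have u: "\<phi> s \<in> Units Q" using U sb by auto
    have sc: "s \<in> carrier B" using Sc sb by auto
    have "\<phi> s \<otimes>\<^bsub>Q\<^esub> (q \<otimes>\<^bsub>Q\<^esub> \<phi> x) = \<phi> b \<otimes>\<^bsub>Q\<^esub> \<phi> x"
      using u sb(2) xc phic
      by (simp add: sb(3) Q.m_assoc[symmetric] Q.Units_r_inv Q.Units_closed Q.Units_inv_closed)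
    then have "\<phi> (b \<otimes>\<^bsub>B\<^esub> x) = \<zero>\<^bsub>Q\<^esub>"
      using q u sb(2) xc phim by (simp add: Q.Units_closed)
    then have "b \<otimes>\<^bsub>B\<^esub> x = \<zero>\<^bsub>B\<^esub>" using inj sb xc by auto
    then have "b = \<zero>\<^bsub>B\<^esub>" using lx sb unfolding left_regular_def by auto
    then show "q = \<zero>\<^bsub>Q\<^esub>" using sb u phi0 by (simp add: Q.Units_inv_closed)
  qed
  then have "right_regular Q (\<phi> x)" using QH unfolding regular_def by auto
  then have "right_regular B x"
    unfolding right_regular_def using xc phim phic inj phi0
    by (metis right_regular_def)
  then show "regular B x" using lx unfolding regular_def by auto
next
  interpret B: ring B by fact
  have Sc: "S \<subseteq> carrier B" using assms(2) unfolding mult_subset_def by blast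
  fix x
  assume H: "right_ring_of_fractions B S Q \<phi> \<and> (\<forall>x. right_regular Q x \<longrightarrow> regular Q x)"
    and lx: "right_regular B x"
  then have rQ: "ring Q" and hom: "\<phi> \<in> ring_hom B Q" and U: "\<forall>s \<in> S. \<phi> s \<in> Units Q"
    and rep: "\<forall>q \<in> carrier Q. \<exists>s \<in> S. \<exists>b \<in> carrier B. q = \<phi> b \<otimes>\<^bsub>Q\<^esub> inv\<^bsub>Q\<^esub> (\<phi> s)"
    and ker: "\<forall>b \<in> carrier B. \<phi> b = \<zero>\<^bsub>Q\<^esub> \<longleftrightarrow> (\<exists>s \<in> S. b \<otimes>\<^bsub>B\<^esub> s = \<zero>\<^bsub>B\<^esub>)"
    and QH: "\<forall>x. right_regular Q x \<longrightarrow> regular Q x"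
    unfolding right_ring_of_fractions_def by auto
  interpret Q: ring Q by fact
  have xc: "x \<in> carrier B" using lx unfolding right_regular_def by auto
  have inj: "b = \<zero>\<^bsub>B\<^esub>" if bh: "b \<in> carrier B" "\<phi> b = \<zero>\<^bsub>Q\<^esub>" for b
  proof -
    obtain s where s: "s \<in> S" "b \<otimes>\<^bsub>B\<^esub> s = \<zero>\<^bsub>B\<^esub>" using ker bh by blast
    then have "regular B s" using assms(3) by auto
    then show ?thesis using s bh unfolding regular_def left_regular_def by auto
  qed
  have phic: "\<phi> b \<in> carrier Q" if "b \<in> carrier B" for b
    using hom that by (simp add: ring_hom_closed)
  have phim: "\<phi> (a \<otimes>\<^bsub>B\<^esub> b) = \<phi> a \<otimes>\<^bsub>Q\<^esub> \<phi> b" if "a \<in> carrier B" "b \<in> carrier B" for a b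
    using hom that by (simp add: ring_hom_mult)
  have phi0: "\<phi> \<zero>\<^bsub>B\<^esub> = \<zero>\<^bsub>Q\<^esub>"
    using ring_hom_zero[OF hom assms(1) rQ] .
  have "right_regular Q (\<phi> x)"
    unfolding right_regular_def
  proof (intro conjI ballI impI)
    show "\<phi> x \<in> carrier Q" using phic xc .
    fix q assume q: "q \<in> carrier Q" "\<phi> x \<otimes>\<^bsub>Q\<^esub> q = \<zero>\<^bsub>Q\<^esub>"
    obtain s b where sb: "s \<in> S" "b \<in> carrier B" "q = \<phi> b \<otimes>\<^bsub>Q\<^esub> inv\<^bsub>Q\<^esub> (\<phi> s)"
      using rep q by auto
    have u: "\<phi> s \<in> Units Q" using U sb by auto
    have "(\<phi> x \<otimes>\<^bsub>Q\<^esub> q) \<otimes>\<^bsub>Q\<^esub> \<phi> s = \<phi> x \<otimes>\<^bsub>Q\<^esub> \<phi> b"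
      using u sb(2) xc phic
      by (simp add: sb(3) Q.m_assoc Q.Units_l_inv Q.Units_closed Q.Units_inv_closed)
    then have "\<phi> (x \<otimes>\<^bsub>B\<^esub> b) = \<zero>\<^bsub>Q\<^esub>"
      using q u sb(2) xc phim by (simp add: Q.Units_closed)
    then have "x \<otimes>\<^bsub>B\<^esub> b = \<zero>\<^bsub>B\<^esub>" using inj sb xc by auto
    then have "b = \<zero>\<^bsub>B\<^esub>" using lx sb unfolding right_regular_def by auto
    then show "q = \<zero>\<^bsub>Q\<^esub>" using sb u phi0 by (simp add: Q.Units_inv_closed)
  qed
  then have "left_regular Q (\<phi> x)" using QH unfolding regular_def by auto
  then have "left_regular B x"
    unfolding left_regular_def using xc phim phic inj phi0
    by (metis left_regular_def)
  then show "regular B x" using lx unfolding regular_def by auto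
qed

end
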